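(* Let $G$ be a group and let $A$ be a finite set. Then every subshift $X \subset A^G$ with bounded propagation is strongly irreducible and of finite type.
   Context: $A^G=\{x\colon G\to A\}$ carries the prodiscrete topology and the $G$-shift action $(gx)(h)=x(g^{-1}h)$; a subshift is a closed $G$-invariant subset. For $X\subset A^G$ and $\Omega\subset G$ finite, $X|_\Omega=\{x|_\Omega : x\in X\}\subset A^\Omega$. For a finite $\Delta\subset G$, $X$ has $\Delta$-propagation if: whenever $\Omega\subset G$ is finite and $p\in A^\Omega$ satisfies $p|_{\Omega\cap g\Delta}\in X|_{\Omega\cap g\Delta}$ for all $g\in G$, then $p\in X|_\Omega$. $X$ has bounded propagation if it has $\Delta$-propagation for some finite $\Delta\subset G$. $X$ is of finite type if there are finite $\Omega\subset G$ and $\mathcal P\subset A^\Omega$ with $X=\{x\in A^G:(gx)|_\Omega\in\mathcal P\ \forall g\in G\}$. $X$ is strongly irreducible if there is finite $\Delta\subset G$ such that for all finite $\Omega_1,\Omega_2\subset G$ with $\Omega_1\Delta^{-1}\cap\Omega_2=\varnothing$ and all $x_1,x_2\in X$ there is $x\in X$ with $x|_{\Omega_1}=x_1|_{\Omega_1}$, $x|_{\Omega_2}=x_2|_{\Omega_2}$. *)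

theory Defs
  imports "HOL-Analysis.Analysis"
begin

text \<open>The group G is a type of class group_add (written additively, not
necessarily commutative): g^-1 h is written - g + h.  Configurations are
functions 'g => 'a taking values in the alphabet A.\<close>

definition full_shift :: "'a set \<Rightarrow> ('g \<Rightarrow> 'a) set" where
  "full_shift A = (UNIV \<rightarrow>\<^sub>E A)"

definition prodiscrete :: "'a set \<Rightarrow> ('g \<Rightarrow> 'a) topology" where
  "prodiscrete A = product_topology (\<lambda>_. discrete_topology A) UNIV"

definition shift :: "'g::group_add \<Rightarrow> ('g \<Rightarrow> 'a) \<Rightarrow> ('g \<Rightarrow> 'a)" where
  "shift g x = (\<lambda>h. x (- g + h))"

definition subshift :: "'a set \<Rightarrow> ('g::group_add \<Rightarrow> 'a) set \<Rightarrow> bool" where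
  "subshift A X \<longleftrightarrow> X \<subseteq> full_shift A \<and> closedin (prodiscrete A) X
     \<and> (\<forall>g. \<forall>x\<in>X. shift g x \<in> X)"

definition restr_set :: "('g \<Rightarrow> 'a) set \<Rightarrow> 'g set \<Rightarrow> ('g \<Rightarrow> 'a) set" where
  "restr_set X \<Omega> = (\<lambda>x. restrict x \<Omega>) ` X"

definition left_translate :: "'g::group_add \<Rightarrow> 'g set \<Rightarrow> 'g set" where
  "left_translate g \<Delta> = (\<lambda>d. g + d) ` \<Delta>"

definition has_propagation :: "'a set \<Rightarrow> ('g::group_add \<Rightarrow> 'a) set \<Rightarrow> 'g set \<Rightarrow> bool" where
  "has_propagation A X \<Delta> \<longleftrightarrow>
     (\<forall>\<Omega> p. finite \<Omega> \<longrightarrow> p \<in> \<Omega> \<rightarrow>\<^sub>E A \<longrightarrow>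
        (\<forall>g. restrict p (\<Omega> \<inter> left_translate g \<Delta>) \<in> restr_set X (\<Omega> \<inter> left_translate g \<Delta>))
        \<longrightarrow> p \<in> restr_set X \<Omega>)"

definition bounded_propagation :: "'a set \<Rightarrow> ('g::group_add \<Rightarrow> 'a) set \<Rightarrow> bool" where
  "bounded_propagation A X \<longleftrightarrow> (\<exists>\<Delta>. finite \<Delta> \<and> has_propagation A X \<Delta>)"

definition finite_type :: "'a set \<Rightarrow> ('g::group_add \<Rightarrow> 'a) set \<Rightarrow> bool" where
  "finite_type A X \<longleftrightarrow> (\<exists>\<Omega> P. finite \<Omega> \<and> P \<subseteq> \<Omega> \<rightarrow>\<^sub>E A \<and>
     X = {x \<in> full_shift A. \<forall>g. restrict (shift g x) \<Omega> \<in> P})"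

definition strongly_irreducible :: "('g::group_add \<Rightarrow> 'a) set \<Rightarrow> bool" where
  "strongly_irreducible X \<longleftrightarrow> (\<exists>\<Delta>. finite \<Delta> \<and>
     (\<forall>\<Omega>1 \<Omega>2. finite \<Omega>1 \<longrightarrow> finite \<Omega>2 \<longrightarrow>
        {w + - d | w d. w \<in> \<Omega>1 \<and> d \<in> \<Delta>} \<inter> \<Omega>2 = {} \<longrightarrow>
        (\<forall>x1\<in>X. \<forall>x2\<in>X. \<exists>x\<in>X. (\<forall>h\<in>\<Omega>1. x h = x1 h) \<and> (\<forall>h\<in>\<Omega>2. x h = x2 h))))"

end

theory Submission
  imports Defs
begin

lemma closed_finite_restr:
  assumes sub: "subshift A X" and x: "x \<in> full_shift A"
    and fin: "\<And>Om. finite Om \<Longrightarrow> restrict x Om \<in> restr_set X Om"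
  shows "x \<in> X"
proof (rule ccontr)
  assume nx: "x \<notin> X"
  have cl: "closedin (prodiscrete A) X" using sub unfolding subshift_def by blast
  have top: "topspace (prodiscrete A) = full_shift A"
    unfolding prodiscrete_def full_shift_def by simp
  have "openin (prodiscrete A) (full_shift A - X)"
    using cl top unfolding closedin_def by metis
  have xin: "x \<in> full_shift A - X" using nx x by blast
  have "openin (product_topology (\<lambda>_. discrete_topology A) UNIV) (full_shift A - X)"
    using \<open>openin (prodiscrete A) (full_shift A - X)\<close> unfolding prodiscrete_def .
  then have "\<forall>x \<in> full_shift A - X. \<exists>U. finite {i \<in> UNIV. U i \<noteq> topspace (discrete_topology A)} \<and>
                 (\<forall>i \<in> UNIV. openin (discrete_topology A) (U i)) \<and> x \<in> Pi\<^sub>E UNIV U \<and> Pi\<^sub>E UNIV U \<subseteq> full_shift A - X"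
    by (simp only: openin_product_topology_alt)
  then obtain U where U0: "finite {i \<in> UNIV. U i \<noteq> topspace (discrete_topology A)}" and
     U: "x \<in> Pi\<^sub>E UNIV U" "Pi\<^sub>E UNIV U \<subseteq> full_shift A - X"
    using xin by (meson bspec)
  have U1: "finite {i \<in> UNIV. U i \<noteq> A}" using U0 by simp
  define F where "F = {i \<in> UNIV. U i \<noteq> A}"
  obtain y where y: "y \<in> X" "restrict x F = restrict y F"
    using fin[of F] U1 unfolding F_def restr_set_def by auto
  have yA: "y \<in> full_shift A" using sub y(1) unfolding subshift_def by blast
  have "y \<in> Pi\<^sub>E UNIV U"
  proof -
    have "y i \<in> U i" for i
    proof (cases "i \<in> F")
      case True
      then have "y i = x i" using y(2) by (metis restrict_apply')
      then show ?thesis using U(1) by auto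
    next
      case False
      then show ?thesis using yA unfolding F_def full_shift_def by auto
    qed
    then show ?thesis by auto
  qed
  then show False using U(2) y(1) by auto
qed

theorem proposition2p9:
  fixes A :: "'a set" and X :: "('g::group_add \<Rightarrow> 'a) set"
  assumes "finite A"
    and "subshift A X"
    and "bounded_propagation A X"
  shows "strongly_irreducible X \<and> finite_type A X"
proof -
  obtain Dl where fD: "finite Dl" and prp: "has_propagation A X Dl"
    using assms(3) unfolding bounded_propagation_def by blast
  have H: "\<And>Om p. finite Om \<Longrightarrow> p \<in> Om \<rightarrow>\<^sub>E A \<Longrightarrow>
      (\<And>g. restrict p (Om \<inter> left_translate g Dl) \<in> restr_set X (Om \<inter> left_translate g Dl))
      \<Longrightarrow> p \<in> restr_set X Om"
    using prp unfolding has_propagation_def by auto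
  have XA: "\<And>x. x \<in> X \<Longrightarrow> x \<in> full_shift A" using assms(2) unfolding subshift_def by blast
  have shX: "\<And>g x. x \<in> X \<Longrightarrow> shift g x \<in> X" using assms(2) unfolding subshift_def by blast
  have SI: "strongly_irreducible X"
  proof -
    define D where "D = insert 0 ((\<lambda>(d1, d2). - d2 + d1) ` (Dl \<times> Dl))"
    have fin: "finite D" unfolding D_def using fD by auto
    have main: "\<exists>x\<in>X. (\<forall>h\<in>Om1. x h = x1 h) \<and> (\<forall>h\<in>Om2. x h = x2 h)"
      if f1: "finite Om1" and f2: "finite Om2"
        and dis: "{w + - d | w d. w \<in> Om1 \<and> d \<in> D} \<inter> Om2 = {}"
        and x1: "x1 \<in> X" and x2: "x2 \<in> X" for Om1 Om2 x1 x2
    proof -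
      have disj: "Om1 \<inter> Om2 = {}"
      proof -
        have "\<And>w. w \<in> Om1 \<Longrightarrow> w \<in> {w + - d | w d. w \<in> Om1 \<and> d \<in> D}"
        proof -
          fix w assume "w \<in> Om1"
          moreover have "(0::'g) \<in> D" unfolding D_def by simp
          moreover have "w = w + - 0" by simp
          ultimately show "w \<in> {w + - d | w d. w \<in> Om1 \<and> d \<in> D}" by blast
        qed
        then show ?thesis using dis by blast
      qed
      define Om where "Om = Om1 \<union> Om2"
      define q where "q = (\<lambda>h. if h \<in> Om1 then x1 h else x2 h)"
      define p where "p = restrict q Om"
      have fO: "finite Om" using f1 f2 Om_def by auto
      have pA: "p \<in> Om \<rightarrow>\<^sub>E A"
        using XA[OF x1] XA[OF x2] unfolding p_def q_def full_shift_def by (auto simp: PiE_iff)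
      have loc: "restrict p (Om \<inter> left_translate g Dl) \<in> restr_set X (Om \<inter> left_translate g Dl)" for g
      proof -
        let ?S = "Om \<inter> left_translate g Dl"
        have "?S \<subseteq> Om1 \<or> ?S \<inter> Om1 = {}"
        proof (rule ccontr)
          assume "\<not> (?S \<subseteq> Om1 \<or> ?S \<inter> Om1 = {})"
          then obtain a b where a: "a \<in> ?S" "a \<in> Om1" and b: "b \<in> ?S" "b \<notin> Om1" by blast
          then have b2: "b \<in> Om2" unfolding Om_def by auto
          obtain d1 where d1: "d1 \<in> Dl" "a = g + d1" using a unfolding left_translate_def by auto
          obtain d2 where d2: "d2 \<in> Dl" "b = g + d2" using b unfolding left_translate_def by auto
          have mem: "- d2 + d1 \<in> D" unfolding D_def by (rule insertI2, rule rev_image_eqI[of "(d1,d2)"]) (use d1 d2 in auto)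
          have "b = a + - (- d2 + d1)"
            using d1 d2 by (simp add: add.assoc minus_add)
          then have "b \<in> {w + - d | w d. w \<in> Om1 \<and> d \<in> D}" using a mem by blast
          then show False using dis b2 by blast
        qed
        then show ?thesis
        proof
          assume "?S \<subseteq> Om1"
          then have "restrict p ?S = restrict x1 ?S"
          proof (intro ext)
            fix h
            show "restrict p ?S h = restrict x1 ?S h"
            proof (cases "h \<in> ?S")
              case True
              then have "h \<in> Om" "h \<in> Om1" using \<open>?S \<subseteq> Om1\<close> by blast+
              then show ?thesis using True unfolding p_def q_def by simp
            next case False then show ?thesis unfolding restrict_def by auto
            qed
          qed
          then show ?thesis using x1 unfolding restr_set_def by blast
        next
          assume "?S \<inter> Om1 = {}"
          then have "restrict p ?S = restrict x2 ?S"
          proof (intro ext)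
            fix h
            show "restrict p ?S h = restrict x2 ?S h"
            proof (cases "h \<in> ?S")
              case True
              then have "h \<in> Om" "h \<notin> Om1" using \<open>?S \<inter> Om1 = {}\<close> by blast+
              then show ?thesis using True unfolding p_def q_def by simp
            next case False then show ?thesis unfolding restrict_def by auto
            qed
          qed
          then show ?thesis using x2 unfolding restr_set_def by blast
        qed
      qed
      have "p \<in> restr_set X Om" by (rule H[OF fO pA loc])
      then obtain x where x: "x \<in> X" "restrict x Om = p" unfolding restr_set_def by auto
      have "\<forall>h\<in>Om1. x h = x1 h"
      proof
        fix h assume "h \<in> Om1"
        then show "x h = x1 h" using fun_cong[OF x(2), of h] unfolding p_def q_def Om_def by auto
      qed
      moreover have "\<forall>h\<in>Om2. x h = x2 h"
      proof
        fix h assume h: "h \<in> Om2"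
        then have "h \<notin> Om1" using disj by blast
        then show "x h = x2 h" using h fun_cong[OF x(2), of h] unfolding p_def q_def Om_def by auto
      qed
      ultimately show ?thesis using x(1) by blast
    qed
    show ?thesis unfolding strongly_irreducible_def
      by (intro exI[of _ D] conjI fin allI impI ballI main)
  qed
  have FT: "finite_type A X"
  proof -
    define P where "P = restr_set X Dl"
    have PA: "P \<subseteq> Dl \<rightarrow>\<^sub>E A"
      using XA unfolding P_def restr_set_def full_shift_def by (force simp: PiE_iff)
    have "X = {x \<in> full_shift A. \<forall>g. restrict (shift g x) Dl \<in> P}"
    proof
      show "X \<subseteq> {x \<in> full_shift A. \<forall>g. restrict (shift g x) Dl \<in> P}"
        using XA shX unfolding P_def restr_set_def by blast
    next
      show "{x \<in> full_shift A. \<forall>g. restrict (shift g x) Dl \<in> P} \<subseteq> X"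
      proof
        fix x assume "x \<in> {x \<in> full_shift A. \<forall>g. restrict (shift g x) Dl \<in> P}"
        then have xA: "x \<in> full_shift A" and loc: "\<And>g. restrict (shift g x) Dl \<in> P" by auto
        show "x \<in> X"
        proof (rule closed_finite_restr[OF assms(2) xA])
          fix Om :: "'g set" assume fO: "finite Om"
          let ?p = "restrict x Om"
          have pA: "?p \<in> Om \<rightarrow>\<^sub>E A" using xA unfolding full_shift_def by auto
          have "restrict ?p (Om \<inter> left_translate g Dl) \<in> restr_set X (Om \<inter> left_translate g Dl)" for g
          proof -
            obtain y where y: "y \<in> X" "restrict (shift (- g) x) Dl = restrict y Dl"
              using loc[of "-g"] unfolding P_def restr_set_def by auto
            have "restrict ?p (Om \<inter> left_translate g Dl) = restrict (shift g y) (Om \<inter> left_translate g Dl)"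
            proof
              fix h
              show "restrict ?p (Om \<inter> left_translate g Dl) h = restrict (shift g y) (Om \<inter> left_translate g Dl) h"
              proof (cases "h \<in> Om \<inter> left_translate g Dl")
                case True
                then obtain d where d: "d \<in> Dl" "h = g + d" unfolding left_translate_def by auto
                have "shift (- g) x d = y d" using fun_cong[OF y(2), of d] d(1) by simp
                then have "x (g + d) = y d" unfolding shift_def by simp
                moreover have "shift g y h = y d" unfolding shift_def d(2) by (simp add: add.assoc[symmetric])
                ultimately show ?thesis using True d(2) by simp
              next
                case False
                then show ?thesis unfolding restrict_def by auto
              qed
            qed
            then show ?thesis using shX[OF y(1)] unfolding restr_set_def by blast
          qed
          moreover have "restrict (restrict x Om) (Om \<inter> S) = restrict x (Om \<inter> S)" for S
            by (auto simp: restrict_def)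
          ultimately have "?p \<in> restr_set X Om"
            using H[OF fO pA] by metis
          then show "restrict x Om \<in> restr_set X Om" .
        qed
      qed
    qed
    then show ?thesis unfolding finite_type_def using fD PA by blast
  qed
  show ?thesis using SI FT by blast
qed

end
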